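(* For all integers $n\ge 2$ and $d\ge 1$, $$\left(\frac{(n-1)n^{n-2}}{2}\right)^d\le N(n,d)\le \binom{n}{2}^{nd}.$$
   Context: A (general) pedigree $\mathcal{T}(X_0)$ on a set $X_0$ is a finite directed graph on a vertex set $V$ such that: every vertex has out-degree $0$ or $2$; $X_0\subseteq V$ and every vertex of $X_0$ has in-degree $0$; there are no isolated vertices; vertices of $X_0$ are extant. A discrete generation pedigree of depth $d$ on $X_0$ has vertex set $V=\bigcup_{i=0}^d X_i$ with the $X_i$ disjoint, $X_d$ the set of vertices of out-degree $0$, and every vertex of $X_i$ ($i<d$) having its two out-arcs (to its two parents) in $X_{i+1}$. $N(n,d)$ denotes the number of discrete generation pedigrees of depth $d$ with $|X_i|=n$ for all $0\le i\le d$, on a fixed labelled extant set $X_0$, counted up to isomorphisms (arc-preserving bijections) that fix every vertex of $X_0$; all other vertices are unlabelled. *)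

theory Defs
  imports Complex_Main
begin

text \<open>Concrete vertex set for a discrete generation pedigree of depth d with n vertices
  per generation: vertex (i,j) is the j-th vertex of generation X_i. Generation X_0 =
  {(0,j). j < n} is the fixed labelled extant set; the labels of the other vertices are
  irrelevant because we count isomorphism classes (isomorphisms fix X_0 pointwise).
  Arcs point from a child to its parents.\<close>

definition pedV :: "nat \<Rightarrow> nat \<Rightarrow> (nat \<times> nat) set" where
  "pedV n d = {(i, j). i \<le> d \<and> j < n}"

definition dgp :: "nat \<Rightarrow> nat \<Rightarrow> ((nat \<times> nat) \<times> (nat \<times> nat)) set \<Rightarrow> bool" where
  "dgp n d E \<longleftrightarrow>
     E \<subseteq> pedV n d \<times> pedV n d \<and>
     (\<forall>(u, v) \<in> E. fst v = Suc (fst u)) \<and>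
     (\<forall>u \<in> pedV n d. fst u < d \<longrightarrow> card {v. (u, v) \<in> E} = 2) \<and>
     (\<forall>u \<in> pedV n d. \<exists>v. (u, v) \<in> E \<or> (v, u) \<in> E)"

definition ped_iso :: "nat \<Rightarrow> nat \<Rightarrow> ((nat \<times> nat) \<times> (nat \<times> nat)) set
    \<Rightarrow> ((nat \<times> nat) \<times> (nat \<times> nat)) set \<Rightarrow> bool" where
  "ped_iso n d E E' \<longleftrightarrow>
     (\<exists>f. bij_betw f (pedV n d) (pedV n d) \<and>
          (\<forall>j < n. f (0, j) = (0, j)) \<and>
          (\<forall>u \<in> pedV n d. \<forall>v \<in> pedV n d. (u, v) \<in> E \<longleftrightarrow> (f u, f v) \<in> E'))"

definition ped_iso_rel :: "nat \<Rightarrow> nat \<Rightarrow>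
    (((nat \<times> nat) \<times> (nat \<times> nat)) set \<times> ((nat \<times> nat) \<times> (nat \<times> nat)) set) set" where
  "ped_iso_rel n d = {(E, E'). dgp n d E \<and> dgp n d E' \<and> ped_iso n d E E'}"

definition N :: "nat \<Rightarrow> nat \<Rightarrow> nat" where
  "N n d = card ({E. dgp n d E} // ped_iso_rel n d)"

end

theory Submission
  imports Defs "HOL-Library.FuncSet"
begin



definition forest :: "'a set \<Rightarrow> 'a set \<Rightarrow> ('a \<Rightarrow> 'a) set" where
  "forest V R = {a \<in> (V - R) \<rightarrow>\<^sub>E V. \<exists>h::'a \<Rightarrow> nat. \<forall>x \<in> V - R. h (a x) < h x}"

lemma forest_min:
  assumes "a \<in> forest V R" "finite D" "D \<noteq> {}" "D \<subseteq> V - R" "\<forall>x\<in>D. a x \<in> D"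
  shows False
proof -
  obtain h :: "'a \<Rightarrow> nat" where h: "\<forall>x \<in> V - R. h (a x) < h x"
    using assms(1) unfolding forest_def by blast
  have "finite (h ` D)" "h ` D \<noteq> {}" using assms by auto
  then have "Min (h ` D) \<in> h ` D" by (rule Min_in)
  then obtain x where x: "x \<in> D" "h x = Min (h ` D)" by auto
  then have "a x \<in> D" using assms by auto
  then have "Min (h ` D) \<le> h (a x)" using \<open>finite (h ` D)\<close> by auto
  moreover have "h (a x) < h x" using h x(1) assms(4) by blast
  ultimately show False using x by auto
qed

lemma forest_no_roots:
  assumes "finite V" "V \<noteq> {}" shows "forest V {} = {}"
proof -
  { fix a assume a: "a \<in> forest V {}"
    then have "\<forall>x\<in>V. a x \<in> V" unfolding forest_def by auto
    with forest_min[OF a assms(1) assms(2)] have False by auto }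
  then show ?thesis by auto
qed

lemma forest_all_roots: "forest V V = {\<lambda>x. undefined}"
  unfolding forest_def by auto

lemma sum_pow_card:
  assumes "finite W"
  shows "(\<Sum>S\<in>Pow W. g (card S)) = (\<Sum>s\<le>card W. (card W choose s) * (g s :: nat))"
proof -
  have "(\<Sum>S\<in>Pow W. g (card S)) = (\<Sum>s\<in>{..card W}. \<Sum>S\<in>{S \<in> Pow W. card S = s}. g (card S))"
    by (rule sum.group[symmetric]) (use assms in \<open>auto intro: card_mono\<close>)
  also have "\<dots> = (\<Sum>s\<le>card W. (card W choose s) * g s)"
  proof (rule sum.cong[OF refl])
    fix s assume "s \<in> {..card W}"
    have "(\<Sum>S\<in>{S \<in> Pow W. card S = s}. g (card S)) = (\<Sum>S\<in>{S \<in> Pow W. card S = s}. g s)"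
      by auto
    also have "\<dots> = card {S \<in> Pow W. card S = s} * g s" by simp
    also have "card {S \<in> Pow W. card S = s} = card W choose s"
      using n_subsets[OF assms, of s] by (simp add: Pow_def)
    finally show "(\<Sum>S\<in>{S \<in> Pow W. card S = s}. g (card S)) = (card W choose s) * g s" .
  qed
  finally show ?thesis .
qed

lemma binom_ident:
  "(\<Sum>s\<le>Suc m. (Suc m choose s) * ((k::nat) ^ s * (s * Suc m ^ (Suc m - s))))
     = Suc m * k * (k + Suc m) ^ m"
proof -
  have "(\<Sum>s\<le>Suc m. (Suc m choose s) * (k ^ s * (s * Suc m ^ (Suc m - s))))
      = (\<Sum>t\<le>m. (Suc m choose Suc t) * (k ^ Suc t * (Suc t * Suc m ^ (m - t))))"
    by (subst sum.atMost_Suc_shift) simp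
  also have "\<dots> = (\<Sum>t\<le>m. Suc m * k * ((m choose t) * k ^ t * Suc m ^ (m - t)))"
  proof (rule sum.cong[OF refl])
    fix t
    have "Suc t * (Suc m choose Suc t) = Suc m * (m choose t)" by (rule Suc_times_binomial)
    have "(Suc m choose Suc t) * (k ^ Suc t * (Suc t * Suc m ^ (m - t)))
        = (Suc t * (Suc m choose Suc t)) * (k * k ^ t * Suc m ^ (m - t))"
      by (simp only: power_Suc mult_ac)
    also have "\<dots> = Suc m * k * ((m choose t) * k ^ t * Suc m ^ (m - t))"
      unfolding \<open>Suc t * (Suc m choose Suc t) = Suc m * (m choose t)\<close> by (simp only: mult_ac)
    finally show "(Suc m choose Suc t) * (k ^ Suc t * (Suc t * Suc m ^ (m - t)))
          = Suc m * k * ((m choose t) * k ^ t * Suc m ^ (m - t))" .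
  qed
  also have "\<dots> = Suc m * k * (\<Sum>t\<le>m. (m choose t) * k ^ t * Suc m ^ (m - t))"
    by (simp add: sum_distrib_left)
  also have "(\<Sum>t\<le>m. (m choose t) * k ^ t * Suc m ^ (m - t)) = (k + Suc m) ^ m"
    unfolding binomial_ring by simp
  finally show ?thesis .
qed

lemma forest_decomp:
  assumes "R \<subseteq> V"
  shows "bij_betw (\<lambda>a. ({x\<in>V - R. a x \<in> R}, restrict a {x\<in>V - R. a x \<in> R},
                         restrict a ((V - R) - {x\<in>V - R. a x \<in> R})))
           (forest V R) (SIGMA S:Pow (V - R). (S \<rightarrow>\<^sub>E R) \<times> forest (V - R) S)"
proof (rule bij_betw_byWitness[where f' = "\<lambda>(S, b1, a2) x. if x \<in> S then b1 x else a2 x"])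
  let ?W = "V - R"
  show "\<forall>a\<in>forest V R. (\<lambda>(S, b1, a2) x. if x \<in> S then b1 x else a2 x)
          ({x\<in>?W. a x \<in> R}, restrict a {x\<in>?W. a x \<in> R}, restrict a (?W - {x\<in>?W. a x \<in> R})) = a"
  proof
    fix a assume a: "a \<in> forest V R"
    then have ext: "a \<in> extensional ?W" unfolding forest_def PiE_def by auto
    show "(\<lambda>(S, b1, a2) x. if x \<in> S then b1 x else a2 x)
          ({x\<in>?W. a x \<in> R}, restrict a {x\<in>?W. a x \<in> R}, restrict a (?W - {x\<in>?W. a x \<in> R})) = a"
      using ext by (auto simp: fun_eq_iff restrict_def extensional_def)
  qed
  show "\<forall>p\<in>(SIGMA S:Pow ?W. (S \<rightarrow>\<^sub>E R) \<times> forest ?W S).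
          (\<lambda>a. ({x\<in>?W. a x \<in> R}, restrict a {x\<in>?W. a x \<in> R}, restrict a (?W - {x\<in>?W. a x \<in> R})))
            ((\<lambda>(S, b1, a2) x. if x \<in> S then b1 x else a2 x) p) = p"
  proof
    fix p assume p: "p \<in> (SIGMA S:Pow ?W. (S \<rightarrow>\<^sub>E R) \<times> forest ?W S)"
    obtain S b1 a2 where pe: "p = (S, b1, a2)" by (cases p) auto
    have S: "S \<subseteq> ?W" and b1: "b1 \<in> S \<rightarrow>\<^sub>E R" and a2: "a2 \<in> forest ?W S" using p pe by auto
    have a2': "a2 \<in> (?W - S) \<rightarrow>\<^sub>E ?W" using a2 unfolding forest_def by auto
    let ?a = "\<lambda>x. if x \<in> S then b1 x else a2 x"
    have Seq: "{x\<in>?W. ?a x \<in> R} = S"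
    proof -
      { fix x assume "x \<in> ?W" "x \<notin> S"
        then have "a2 x \<in> ?W" using a2' by auto
        then have "a2 x \<notin> R" by auto }
      then show ?thesis using S b1 by auto
    qed
    have r1: "restrict ?a S = b1" using b1 by (auto simp: fun_eq_iff restrict_def PiE_def extensional_def)
    have r2: "restrict ?a (?W - S) = a2" using a2' by (auto simp: fun_eq_iff restrict_def PiE_def extensional_def)
    show "(\<lambda>a. ({x\<in>?W. a x \<in> R}, restrict a {x\<in>?W. a x \<in> R}, restrict a (?W - {x\<in>?W. a x \<in> R})))
            ((\<lambda>(S, b1, a2) x. if x \<in> S then b1 x else a2 x) p) = p"
      unfolding pe using Seq r1 r2 by simp
  qed
  show "(\<lambda>a. ({x\<in>?W. a x \<in> R}, restrict a {x\<in>?W. a x \<in> R}, restrict a (?W - {x\<in>?W. a x \<in> R})))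
          ` forest V R \<subseteq> (SIGMA S:Pow ?W. (S \<rightarrow>\<^sub>E R) \<times> forest ?W S)"
  proof
    fix p assume "p \<in> (\<lambda>a. ({x\<in>?W. a x \<in> R}, restrict a {x\<in>?W. a x \<in> R}, restrict a (?W - {x\<in>?W. a x \<in> R})))
          ` forest V R"
    then obtain a where a: "a \<in> forest V R"
      and pe: "p = ({x\<in>?W. a x \<in> R}, restrict a {x\<in>?W. a x \<in> R}, restrict a (?W - {x\<in>?W. a x \<in> R}))"
      by auto
    obtain h :: "_ \<Rightarrow> nat" where h: "\<forall>x \<in> ?W. h (a x) < h x" and aP: "a \<in> ?W \<rightarrow>\<^sub>E V"
      using a unfolding forest_def by auto
    let ?S = "{x\<in>?W. a x \<in> R}"
    have "restrict a ?S \<in> ?S \<rightarrow>\<^sub>E R" by auto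
    moreover have "restrict a (?W - ?S) \<in> forest ?W ?S"
      unfolding forest_def
    proof (intro CollectI conjI exI)
      show "restrict a (?W - ?S) \<in> (?W - ?S) \<rightarrow>\<^sub>E ?W" using aP by auto
      show "\<forall>x\<in>?W - ?S. h (restrict a (?W - ?S) x) < h x" using h by auto
    qed
    ultimately show "p \<in> (SIGMA S:Pow ?W. (S \<rightarrow>\<^sub>E R) \<times> forest ?W S)" unfolding pe by auto
  qed
  show "(\<lambda>(S, b1, a2) x. if x \<in> S then b1 x else a2 x) ` (SIGMA S:Pow ?W. (S \<rightarrow>\<^sub>E R) \<times> forest ?W S)
          \<subseteq> forest V R"
  proof
    fix a assume "a \<in> (\<lambda>(S, b1, a2) x. if x \<in> S then b1 x else a2 x) ` (SIGMA S:Pow ?W. (S \<rightarrow>\<^sub>E R) \<times> forest ?W S)"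
    then obtain S b1 a2 where S: "S \<subseteq> ?W" and b1: "b1 \<in> S \<rightarrow>\<^sub>E R" and a2: "a2 \<in> forest ?W S"
      and ae: "a = (\<lambda>x. if x \<in> S then b1 x else a2 x)" by auto
    obtain h2 :: "_ \<Rightarrow> nat" where h2: "\<forall>x \<in> ?W - S. h2 (a2 x) < h2 x" and a2': "a2 \<in> (?W - S) \<rightarrow>\<^sub>E ?W"
      using a2 unfolding forest_def by auto
    show "a \<in> forest V R" unfolding forest_def
    proof (intro CollectI conjI exI)
      show "a \<in> ?W \<rightarrow>\<^sub>E V"
      proof (rule PiE_I)
        fix x assume x: "x \<in> ?W"
        show "a x \<in> V"
        proof (cases "x \<in> S")
          case True then show ?thesis using b1 assms ae by auto
        next
          case False then show ?thesis using a2' x ae by auto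
        qed
      next
        fix x assume x: "x \<notin> ?W"
        then have "x \<notin> S" "x \<notin> ?W - S" using S by auto
        then show "a x = undefined" using a2' ae by (simp add: PiE_def extensional_def)
      qed
      show "\<forall>x\<in>?W. (\<lambda>x. if x \<in> R then 0 else Suc (h2 x)) (a x) < (\<lambda>x. if x \<in> R then 0 else Suc (h2 x)) x"
      proof
        fix x assume x: "x \<in> ?W"
        show "(\<lambda>x. if x \<in> R then 0 else Suc (h2 x)) (a x) < (\<lambda>x. if x \<in> R then 0 else Suc (h2 x)) x"
        proof (cases "x \<in> S")
          case True then show ?thesis using b1 x ae by auto
        next
          case False
          then have "a x = a2 x" "a2 x \<in> ?W" using ae a2' x by auto
          then show ?thesis using h2 x False by auto
        qed
      qed
    qed
  qed
qed

lemma finite_forest: "finite V \<Longrightarrow> finite (forest V R)"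
  by (rule finite_subset[of _ "(V - R) \<rightarrow>\<^sub>E V"]) (auto simp: forest_def intro: finite_PiE)

lemma forest_card:
  assumes "finite V" "R \<subseteq> V" "V \<noteq> {}"
  shows "card (forest V R) * card V = card R * card V ^ (card V - card R)"
  using assms
proof (induction "card V" arbitrary: V R rule: less_induct)
  case less
  show ?case
  proof (cases "R = {}")
    case True then show ?thesis using forest_no_roots[OF less.prems(1,3)] by simp
  next
    case Rne: False
    show ?thesis
    proof (cases "V = R")
      case True then show ?thesis by (simp add: forest_all_roots)
    next
      case False
      define W where "W = V - R"
      define m where "m = card W"
      define k where "k = card R"
      have finW: "finite W" using less.prems W_def by auto
      have Wne: "W \<noteq> {}" using False less.prems W_def by auto
      have mpos: "m > 0" using finW Wne m_def by (simp add: card_gt_0_iff)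
      have finR: "finite R" using less.prems finite_subset by auto
      have cV: "card V = m + k" unfolding m_def k_def W_def
        using card_Diff_subset[OF finR less.prems(2)] card_mono[OF less.prems(1,2)] by simp
      have "k > 0" using finR Rne k_def by (simp add: card_gt_0_iff)
      then have ltW: "card W < card V" using cV m_def by simp
      have IH: "\<And>S. S \<subseteq> W \<Longrightarrow> card (forest W S) * m = card S * m ^ (m - card S)"
        using less.hyps[OF ltW finW _ Wne] unfolding m_def by blast
      have "card (forest V R) = card (SIGMA S:Pow W. (S \<rightarrow>\<^sub>E R) \<times> forest W S)"
        using bij_betw_same_card[OF forest_decomp[OF less.prems(2)]] W_def by simp
      also have "\<dots> = (\<Sum>S\<in>Pow W. card ((S \<rightarrow>\<^sub>E R) \<times> forest W S))"
      proof (rule card_SigmaI)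
        show "finite (Pow W)" using finW by simp
        show "\<forall>S\<in>Pow W. finite ((S \<rightarrow>\<^sub>E R) \<times> forest W S)"
        proof
          fix S assume "S \<in> Pow W"
          then have "finite S" using finW finite_subset by auto
          then show "finite ((S \<rightarrow>\<^sub>E R) \<times> forest W S)"
            using finW finR by (intro finite_cartesian_product finite_PiE finite_forest) auto
        qed
      qed
      also have "\<dots> = (\<Sum>S\<in>Pow W. k ^ card S * card (forest W S))"
      proof (rule sum.cong[OF refl])
        fix S assume "S \<in> Pow W"
        then have "finite S" using finW finite_subset by auto
        then show "card ((S \<rightarrow>\<^sub>E R) \<times> forest W S) = k ^ card S * card (forest W S)"
          by (simp add: card_cartesian_product card_PiE k_def)
      qed
      finally have c: "card (forest V R) = (\<Sum>S\<in>Pow W. k ^ card S * card (forest W S))" .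
      have "card (forest V R) * m = (\<Sum>S\<in>Pow W. k ^ card S * (card (forest W S) * m))"
        unfolding c by (simp add: sum_distrib_right mult.assoc)
      also have "\<dots> = (\<Sum>S\<in>Pow W. k ^ card S * (card S * m ^ (m - card S)))"
        using IH by (intro sum.cong) auto
      also have "\<dots> = (\<Sum>s\<le>m. (m choose s) * (k ^ s * (s * m ^ (m - s))))"
        using sum_pow_card[OF finW, of "\<lambda>s. k ^ s * (s * m ^ (m - s))"] m_def by simp
      also have "\<dots> = m * k * (k + m) ^ (m - 1)"
        using binom_ident[of "m - 1" k] mpos by simp
      finally have "card (forest V R) * m = m * (k * (k + m) ^ (m - 1))" by simp
      then have "card (forest V R) = k * (k + m) ^ (m - 1)" using mpos by simp
      moreover obtain m' where m': "m = Suc m'" using mpos gr0_implies_Suc by blast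
      ultimately show ?thesis unfolding cV k_def[symmetric]
        by (simp add: mult_ac add.commute)
    qed
  qed
qed





section \<open>Level structures\<close>

definition Pmk :: "nat \<Rightarrow> (nat \<Rightarrow> nat) \<times> nat \<Rightarrow> nat \<Rightarrow> nat set" where
  "Pmk n ab u = (if u < n - 1 then {u, fst ab u} else if u = n - 1 then {n - 1, snd ab} else {})"

definition Tset :: "nat \<Rightarrow> ((nat \<Rightarrow> nat) \<times> nat) set" where
  "Tset n = forest {..<n} {n - 1} \<times> {..<n - 1}"

lemma fo_basic:
  assumes "2 \<le> (n::nat)" "a \<in> forest {..<n} {n - 1}" "v < n - 1"
  shows "a v < n" "a v \<noteq> v"
proof -
  obtain h :: "nat \<Rightarrow> nat" where h: "\<forall>x \<in> {..<n} - {n - 1}. h (a x) < h x"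
    and aP: "a \<in> ({..<n} - {n - 1}) \<rightarrow>\<^sub>E {..<n}"
    using assms(2) unfolding forest_def by blast
  have v: "v \<in> {..<n} - {n - 1}" using assms by auto
  show "a v < n" using aP v by auto
  have "h (a v) < h v" using h v by blast
  then show "a v \<noteq> v" by auto
qed

lemma fo_min:
  assumes "2 \<le> (n::nat)" "a \<in> forest {..<n} {n - 1}" "D \<subseteq> {..<n - 1}" "D \<noteq> {}"
    "\<forall>x\<in>D. a x \<in> D"
  shows False
proof (rule forest_min[OF assms(2) _ assms(4) _ assms(5)])
  show "finite D" using assms(3) finite_subset by blast
  show "D \<subseteq> {..<n} - {n - 1}" using assms(1,3) by auto
qed

definition good :: "nat \<Rightarrow> (nat \<Rightarrow> nat) \<Rightarrow> nat \<Rightarrow> (nat \<Rightarrow> nat) \<Rightarrow> bool" where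
  "good n a b \<sigma> \<longleftrightarrow> (\<forall>v<n - 1. \<sigma> v \<noteq> v \<longrightarrow> \<sigma> (a v) = v) \<and> (\<sigma> (n - 1) \<noteq> n - 1 \<longrightarrow> \<sigma> b = n - 1)"

lemma good_of_rel:
  assumes "\<forall>u<n. \<sigma> ` Pmk n (a, b) u = Pmk n (a', b') u" "2 \<le> (n::nat)"
  shows "good n a b \<sigma>"
  unfolding good_def
proof (intro conjI allI impI)
  fix v assume v: "v < n - 1" "\<sigma> v \<noteq> v"
  have "\<sigma> ` {v, a v} = {v, a' v}" using assms(1)[rule_format, of v] v by (simp add: Pmk_def)
  then have "v \<in> {\<sigma> v, \<sigma> (a v)}" by auto
  then show "\<sigma> (a v) = v" using v by auto
next
  assume A: "\<sigma> (n - 1) \<noteq> n - 1"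
  have E: "\<sigma> ` {n - 1, b} = {n - 1, b'}" using assms(1)[rule_format, of "n - 1"] assms(2)
    by (simp add: Pmk_def)
  have "n - 1 \<in> \<sigma> ` {n - 1, b}" unfolding E by simp
  then show "\<sigma> b = n - 1" using A by auto
qed

lemma good_fix:
  assumes "2 \<le> (n::nat)" "a \<in> forest {..<n} {n - 1}" "good n a b \<sigma>" "\<sigma> (n - 1) = n - 1"
  shows "\<forall>v<n. \<sigma> v = v"
proof -
  let ?D = "{v. v < n - 1 \<and> \<sigma> v \<noteq> v}"
  have "\<forall>x\<in>?D. a x \<in> ?D"
  proof
    fix x assume x: "x \<in> ?D"
    then have ax: "a x < n" "a x \<noteq> x" using fo_basic[OF assms(1,2)] by auto
    have s: "\<sigma> (a x) = x" using x assms(3) unfolding good_def by auto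
    then have "\<sigma> (a x) \<noteq> a x" using ax by auto
    moreover then have "a x \<noteq> n - 1" using assms(4) by auto
    ultimately show "a x \<in> ?D" using ax by auto
  qed
  then have "?D = {}" using fo_min[OF assms(1,2), of ?D] by blast
  show ?thesis
  proof (intro allI impI)
    fix v assume v: "v < n"
    show "\<sigma> v = v"
    proof (cases "v = n - 1")
      case True then show ?thesis using assms(4) by simp
    next
      case False
      then have "v < n - 1" using v by simp
      then show ?thesis using \<open>?D = {}\<close> by blast
    qed
  qed
qed

lemma moved_props:
  assumes "2 \<le> (n::nat)" "a \<in> forest {..<n} {n - 1}" "b < n - 1" "inj_on \<sigma> {..<n}" "\<sigma> ` {..<n} \<subseteq> {..<n}"
    "good n a b \<sigma>" "\<sigma> (n - 1) \<noteq> n - 1"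
  defines "M \<equiv> {v. v < n \<and> \<sigma> v \<noteq> v}"
  shows "n - 1 \<in> M" "b \<in> M" "\<sigma> b = n - 1"
    "\<And>v. v \<in> M \<Longrightarrow> v < n - 1 \<Longrightarrow> a v \<in> M \<and> \<sigma> (a v) = v"
    "\<And>v. v \<in> M \<Longrightarrow> \<sigma> v \<in> M"
proof -
  show sb: "\<sigma> b = n - 1" using assms(6,7) unfolding good_def by auto
  show "n - 1 \<in> M" using assms(1,7) unfolding M_def by auto
  show "b \<in> M" using sb assms(1,3) unfolding M_def by auto
  fix v assume v: "v \<in> M"
  { assume "v < n - 1"
    then have ax: "a v < n" "a v \<noteq> v" using fo_basic[OF assms(1,2)] by auto
    have "\<sigma> (a v) = v" using v \<open>v < n - 1\<close> assms(6) unfolding good_def M_def by auto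
    then show "a v \<in> M \<and> \<sigma> (a v) = v" using ax unfolding M_def by auto }
  have "v < n" "\<sigma> v \<noteq> v" using v M_def by auto
  moreover then have "\<sigma> v < n" using assms(5) by auto
  moreover have "\<sigma> (\<sigma> v) \<noteq> \<sigma> v"
    using inj_onD[OF assms(4), of "\<sigma> v" v] calculation by auto
  ultimately show "\<sigma> v \<in> M" unfolding M_def by auto
qed

lemma moved_sub:
  assumes n: "2 \<le> (n::nat)" and a: "a \<in> forest {..<n} {n - 1}" and b: "b < n - 1"
    and i1: "inj_on \<sigma> {..<n}" "\<sigma> ` {..<n} \<subseteq> {..<n}" "good n a b \<sigma>" "\<sigma> (n - 1) \<noteq> n - 1"
    and i2: "inj_on \<tau> {..<n}" "\<tau> ` {..<n} \<subseteq> {..<n}" "good n a b \<tau>" "\<tau> (n - 1) \<noteq> n - 1"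
  shows "{v. v < n \<and> \<sigma> v \<noteq> v} \<subseteq> {v. v < n \<and> \<tau> v \<noteq> v}"
proof -
  define M1 where "M1 = {v. v < n \<and> \<sigma> v \<noteq> v}"
  define M2 where "M2 = {v. v < n \<and> \<tau> v \<noteq> v}"
  note p1 = moved_props[OF n a b i1, folded M1_def]
  note p2 = moved_props[OF n a b i2, folded M2_def]
  define D where "D = M1 - M2"
  have key: "\<And>x. x \<in> D \<Longrightarrow> \<sigma> x \<in> D \<and> a (\<sigma> x) = x"
  proof -
    fix x assume x: "x \<in> D"
    have xn: "x < n" using x D_def M1_def by auto
    have w: "\<sigma> x \<in> M1" using p1(5) x D_def by auto
    have "\<sigma> x \<noteq> n - 1"
    proof
      assume "\<sigma> x = n - 1"
      then have "\<sigma> x = \<sigma> b" using p1(3) by simp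
      then have "x = b" using inj_onD[OF i1(1)] xn b by auto
      then show False using x D_def p2(2) by auto
    qed
    then have wl: "\<sigma> x < n - 1" using w M1_def by auto
    have "\<sigma> (a (\<sigma> x)) = \<sigma> x" using p1(4)[OF w wl] by simp
    moreover have "a (\<sigma> x) < n" using p1(4)[OF w wl] M1_def by auto
    ultimately have ax: "a (\<sigma> x) = x" using inj_onD[OF i1(1)] xn by auto
    have "\<sigma> x \<notin> M2"
    proof
      assume "\<sigma> x \<in> M2"
      then have "a (\<sigma> x) \<in> M2" using p2(4) wl by auto
      then show False using ax x D_def by auto
    qed
    then show "\<sigma> x \<in> D \<and> a (\<sigma> x) = x" using w ax D_def by auto
  qed
  have finD: "finite D" unfolding D_def M1_def by auto
  have "\<sigma> ` D \<subseteq> D" using key by auto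
  moreover have "inj_on \<sigma> D" using i1(1) by (rule inj_on_subset) (auto simp: D_def M1_def)
  ultimately have sD: "\<sigma> ` D = D" using endo_inj_surj[OF finD] by auto
  have "\<forall>x\<in>D. a x \<in> D"
  proof
    fix x assume "x \<in> D"
    then obtain y where y: "y \<in> D" "x = \<sigma> y" using sD by blast
    then show "a x \<in> D" using key by auto
  qed
  moreover have "D \<subseteq> {..<n - 1}"
  proof
    fix x assume "x \<in> D"
    then have "x < n" "x \<noteq> n - 1" using D_def M1_def p2(1) by auto
    then show "x \<in> {..<n - 1}" by auto
  qed
  ultimately have "D = {}" using fo_min[OF n a] by blast
  then show ?thesis unfolding D_def M1_def M2_def by auto
qed

lemma good_unique:
  assumes n: "2 \<le> (n::nat)" and a: "a \<in> forest {..<n} {n - 1}" and b: "b < n - 1"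
    and i1: "inj_on \<sigma> {..<n}" "\<sigma> ` {..<n} \<subseteq> {..<n}" "good n a b \<sigma>" "\<sigma> (n - 1) \<noteq> n - 1"
    and i2: "inj_on \<tau> {..<n}" "\<tau> ` {..<n} \<subseteq> {..<n}" "good n a b \<tau>" "\<tau> (n - 1) \<noteq> n - 1"
  shows "\<forall>v<n. \<sigma> v = \<tau> v"
proof -
  define M where "M = {v. v < n \<and> \<sigma> v \<noteq> v}"
  have MM: "M = {v. v < n \<and> \<tau> v \<noteq> v}"
    using moved_sub[OF n a b i1 i2] moved_sub[OF n a b i2 i1] unfolding M_def by blast
  note p1 = moved_props[OF n a b i1, folded M_def]
  note p2 = moved_props[OF n a b i2, folded MM]
  have pre: "\<And>\<rho> v. inj_on \<rho> {..<n} \<Longrightarrow> \<rho> ` {..<n} \<subseteq> {..<n} \<Longrightarrow>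
      (\<And>w. w \<in> M \<Longrightarrow> w < n - 1 \<Longrightarrow> a w \<in> M \<and> \<rho> (a w) = w) \<Longrightarrow> (\<And>w. w \<in> M \<Longrightarrow> \<rho> w \<in> M) \<Longrightarrow>
      v \<in> M \<Longrightarrow> \<rho> v \<noteq> n - 1 \<Longrightarrow> a (\<rho> v) = v"
  proof -
    fix \<rho> v assume r: "inj_on \<rho> {..<n}" "\<rho> ` {..<n} \<subseteq> {..<n}"
      "\<And>w. w \<in> M \<Longrightarrow> w < n - 1 \<Longrightarrow> a w \<in> M \<and> \<rho> (a w) = w" "\<And>w. w \<in> M \<Longrightarrow> \<rho> w \<in> M"
      and v: "v \<in> M" "\<rho> v \<noteq> n - 1"
    have "\<rho> v \<in> M" using r(4) v by auto
    then have wl: "\<rho> v < n - 1" using v M_def by auto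
    have "a (\<rho> v) \<in> M" "\<rho> (a (\<rho> v)) = \<rho> v" using r(3)[OF \<open>\<rho> v \<in> M\<close> wl] by auto
    then show "a (\<rho> v) = v" using inj_onD[OF r(1)] v M_def by auto
  qed
  show ?thesis
  proof (intro allI impI)
    fix v assume vn: "v < n"
    show "\<sigma> v = \<tau> v"
    proof (cases "v \<in> M")
      case False then show ?thesis using MM vn M_def by auto
    next
      case True
      show ?thesis
      proof (cases "\<sigma> v = n - 1")
        case True
        then have "\<sigma> v = \<sigma> b" using p1(3) by simp
        then have "v = b" using inj_onD[OF i1(1)] vn b by auto
        then show ?thesis using True p2(3) by simp
      next
        case False
        have t: "\<tau> v \<noteq> n - 1"
        proof
          assume "\<tau> v = n - 1"
          then have "\<tau> v = \<tau> b" using p2(3) by simp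
          then have "v = b" using inj_onD[OF i2(1)] vn b by auto
          then show False using False p1(3) by simp
        qed
        have e1: "a (\<sigma> v) = v" using pre[OF i1(1,2) p1(4) p1(5) True False] .
        have e2: "a (\<tau> v) = v" using pre[OF i2(1,2) p2(4) p2(5) True t] .
        have tv: "\<tau> v \<in> M" "\<tau> v < n - 1" using p2(5)[OF True] t MM by auto
        have "\<sigma> (a (\<tau> v)) = \<tau> v" using p1(4)[OF tv] by simp
        then show ?thesis using e2 by simp
      qed
    qed
  qed
qed

lemma no_aut:
  assumes n: "3 \<le> (n::nat)" and a: "a \<in> forest {..<n} {n - 1}" and b: "b < n - 1"
    and i: "inj_on \<sigma> {..<n}" "\<sigma> ` {..<n} \<subseteq> {..<n}"
    and rel: "\<forall>u<n. \<sigma> ` Pmk n (a, b) u = Pmk n (a, b) u"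
  shows "\<forall>v<n. \<sigma> v = v"
proof -
  have n2: "2 \<le> n" using n by simp
  have g: "good n a b \<sigma>" using good_of_rel[OF rel n2] .
  show ?thesis
  proof (cases "\<sigma> (n - 1) = n - 1")
    case True then show ?thesis using good_fix[OF n2 a g] by simp
  next
    case False
    have sb: "\<sigma> b = n - 1" using g False unfolding good_def by auto
    have "\<sigma> ` {n - 1, b} = {n - 1, b}" using rel[rule_format, of "n - 1"] n by (simp add: Pmk_def)
    then have "\<sigma> (n - 1) \<in> {n - 1, b}" by auto
    then have sn: "\<sigma> (n - 1) = b" using False by auto
    have bn: "b \<noteq> n - 1" using b by simp
    let ?D = "{..<n - 1} - {b}"
    have all: "\<forall>x\<in>?D. a x \<in> ?D"
    proof
      fix x assume x: "x \<in> ?D"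
      then have xl: "x < n - 1" "x \<noteq> b" by auto
      have ax: "a x < n" "a x \<noteq> x" using fo_basic[OF n2 a xl(1)] by auto
      have pr: "{\<sigma> x, \<sigma> (a x)} = {x, a x}" using rel[rule_format, of x] xl by (simp add: Pmk_def)
      have xn: "x < n" using xl by simp
      have inj2: "\<sigma> (a x) \<noteq> \<sigma> x" using inj_onD[OF i(1), of "a x" x] ax xn by auto
      show "a x \<in> ?D"
      proof (cases "\<sigma> x = x")
        case True
        then have "\<sigma> (a x) = a x" using pr inj2 by (auto simp: doubleton_eq_iff)
        then have "a x \<noteq> n - 1" "a x \<noteq> b" using sn sb bn by auto
        then show ?thesis using ax by auto
      next
        case False
        then have sx: "\<sigma> x = a x" and sax: "\<sigma> (a x) = x" using pr inj2 by (auto simp: doubleton_eq_iff)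
        have "a x \<noteq> n - 1"
        proof
          assume "a x = n - 1"
          then have "\<sigma> x = \<sigma> b" using sx sb by simp
          moreover have "b < n" using b by simp
          ultimately show False using inj_onD[OF i(1), of x b] xn xl(2) by auto
        qed
        moreover have "a x \<noteq> b" using sax sb xl by auto
        ultimately show ?thesis using ax by auto
      qed
    qed
    have ne: "?D \<noteq> {}"
    proof -
      have "0 \<in> ?D \<or> 1 \<in> ?D" using n by auto
      then show ?thesis by blast
    qed
    have sub: "?D \<subseteq> {..<n - 1}" by auto
    from fo_min[OF n2 a sub ne all] show ?thesis ..
  qed
qed




definition Timg :: "nat \<Rightarrow> (nat \<Rightarrow> nat set) set" where
  "Timg n = Pmk n ` Tset n"

definition act :: "(nat \<Rightarrow> nat) \<Rightarrow> (nat \<Rightarrow> nat set) \<Rightarrow> nat \<Rightarrow> nat set" where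
  "act \<sigma> P = (\<lambda>u. \<sigma> ` P u)"

definition orb :: "nat \<Rightarrow> (nat \<Rightarrow> nat set) \<Rightarrow> (nat \<Rightarrow> nat set) set" where
  "orb n P = {Q \<in> Timg n. \<exists>\<sigma>. inj_on \<sigma> {..<n} \<and> \<sigma> ` {..<n} \<subseteq> {..<n} \<and> Q = act \<sigma> P}"

definition rep :: "nat \<Rightarrow> (nat \<Rightarrow> nat set) \<Rightarrow> nat \<Rightarrow> nat set" where
  "rep n P = (SOME Q. Q \<in> orb n P)"

definition Fam :: "nat \<Rightarrow> (nat \<Rightarrow> nat set) set" where
  "Fam n = rep n ` Timg n"

lemma Tset_D:
  assumes "ab \<in> Tset n"
  shows "fst ab \<in> forest {..<n} {n - 1}" "snd ab < n - 1"
  using assms unfolding Tset_def by auto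

lemma Pmk_props:
  assumes n: "2 \<le> (n::nat)" and ab: "ab \<in> Tset n"
  shows "\<And>u. Pmk n ab u \<subseteq> {..<n}" "\<And>u. n \<le> u \<Longrightarrow> Pmk n ab u = {}"
    "\<And>u. u < n \<Longrightarrow> card (Pmk n ab u) = 2" "\<And>v. v < n \<Longrightarrow> v \<in> Pmk n ab v"
proof -
  note a = Tset_D(1)[OF ab] and b = Tset_D(2)[OF ab]
  fix u
  show "Pmk n ab u \<subseteq> {..<n}"
  proof (cases "u < n - 1")
    case True then show ?thesis using fo_basic[OF n a True] by (auto simp: Pmk_def)
  next
    case False
    show ?thesis
    proof (cases "u = n - 1")
      case True then show ?thesis using b n by (auto simp: Pmk_def)
    next
      case F2: False then show ?thesis using False by (simp add: Pmk_def)
    qed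
  qed
  show "n \<le> u \<Longrightarrow> Pmk n ab u = {}" using n by (auto simp: Pmk_def)
  show "u < n \<Longrightarrow> card (Pmk n ab u) = 2"
  proof -
    assume u: "u < n"
    show ?thesis
    proof (cases "u < n - 1")
      case True then show ?thesis using fo_basic(2)[OF n a True] by (simp add: Pmk_def)
    next
      case False then have "u = n - 1" using u by simp
      then show ?thesis using b by (simp add: Pmk_def)
    qed
  qed
  show "u < n \<Longrightarrow> u \<in> Pmk n ab u"
  proof -
    assume u: "u < n"
    show ?thesis
    proof (cases "u < n - 1")
      case True then show ?thesis by (simp add: Pmk_def)
    next
      case False then have "u = n - 1" using u by simp
      then show ?thesis by (simp add: Pmk_def)
    qed
  qed
qed

lemma Timg_props:
  assumes n: "2 \<le> (n::nat)" and P: "P \<in> Timg n"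
  shows "\<And>u. P u \<subseteq> {..<n}" "\<And>u. n \<le> u \<Longrightarrow> P u = {}"
    "\<And>u. u < n \<Longrightarrow> card (P u) = 2" "\<And>v. v < n \<Longrightarrow> v \<in> P v"
  using P Pmk_props[OF n] unfolding Timg_def by auto

lemma act_fix:
  assumes "\<forall>v<n. \<sigma> v = v" "\<And>u. P u \<subseteq> {..<n}"
  shows "act \<sigma> P = P"
proof
  fix u
  have "\<sigma> ` P u = id ` P u" by (rule image_cong) (use assms in auto)
  then show "act \<sigma> P u = P u" by (simp add: act_def)
qed

lemma act_cong:
  assumes "\<forall>v<n. \<sigma> v = \<tau> v" "\<And>u. P u \<subseteq> {..<n}"
  shows "act \<sigma> P = act \<tau> P"
proof
  fix u
  have "\<sigma> ` P u = \<tau> ` P u" by (rule image_cong) (use assms in auto)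
  then show "act \<sigma> P u = act \<tau> P u" by (simp add: act_def)
qed

lemma act_comp: "act \<tau> (act \<sigma> P) = act (\<tau> \<circ> \<sigma>) P"
  by (simp add: act_def image_comp)

lemma orb_refl: "P \<in> Timg n \<Longrightarrow> P \<in> orb n P"
  unfolding orb_def by (auto intro!: exI[of _ id] simp: act_def)

lemma orb_sub: "orb n P \<subseteq> Timg n"
  unfolding orb_def by auto

lemma orb_trans:
  assumes "Q \<in> orb n P" "R \<in> orb n Q" shows "R \<in> orb n P"
proof -
  obtain \<sigma> where s: "inj_on \<sigma> {..<n}" "\<sigma> ` {..<n} \<subseteq> {..<n}" "Q = act \<sigma> P"
    using assms(1) unfolding orb_def by auto
  obtain \<tau> where t: "inj_on \<tau> {..<n}" "\<tau> ` {..<n} \<subseteq> {..<n}" "R = act \<tau> Q" "R \<in> Timg n"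
    using assms(2) unfolding orb_def by auto
  have "inj_on (\<tau> \<circ> \<sigma>) {..<n}"
    using s(1,2) t(1) by (meson comp_inj_on inj_on_subset)
  moreover have "(\<tau> \<circ> \<sigma>) ` {..<n} \<subseteq> {..<n}" using s(2) t(2) by (auto simp: image_subset_iff)
  moreover have "R = act (\<tau> \<circ> \<sigma>) P" using s(3) t(3) act_comp by simp
  ultimately show ?thesis using t(4) unfolding orb_def by blast
qed

lemma orb_sym:
  assumes n: "2 \<le> (n::nat)" and P: "P \<in> Timg n" and Q: "Q \<in> orb n P"
  shows "P \<in> orb n Q"
proof -
  obtain \<sigma> where s: "inj_on \<sigma> {..<n}" "\<sigma> ` {..<n} \<subseteq> {..<n}" "Q = act \<sigma> P"
    using Q unfolding orb_def by auto
  have im: "\<sigma> ` {..<n} = {..<n}" using endo_inj_surj[OF _ s(2) s(1)] by simp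
  define \<tau> where "\<tau> = inv_into {..<n} \<sigma>"
  have "inj_on \<tau> {..<n}" unfolding \<tau>_def using im by (simp add: inj_on_inv_into)
  moreover have "\<tau> ` {..<n} \<subseteq> {..<n}" unfolding \<tau>_def using im
    by (metis image_subsetI inv_into_into)
  moreover have "act \<tau> Q = P"
  proof -
    have "act \<tau> Q = act (\<tau> \<circ> \<sigma>) P" using s(3) act_comp by simp
    also have "\<dots> = P"
    proof -
      have "\<forall>v<n. (\<tau> \<circ> \<sigma>) v = v" using s(1) by (auto simp: \<tau>_def inv_into_f_f)
      then show ?thesis by (rule act_fix) (rule Timg_props(1)[OF n P])
    qed
    finally show ?thesis .
  qed
  ultimately show ?thesis using P unfolding orb_def by blast
qed

lemma orb_eq:
  assumes n: "2 \<le> (n::nat)" and P: "P \<in> Timg n" and Q: "Q \<in> orb n P"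
  shows "orb n Q = orb n P"
proof
  show "orb n Q \<subseteq> orb n P" using orb_trans[OF Q] by blast
  have "P \<in> orb n Q" by (rule orb_sym[OF n P Q])
  then show "orb n P \<subseteq> orb n Q" using orb_trans by blast
qed

lemma rep_in: "P \<in> Timg n \<Longrightarrow> rep n P \<in> orb n P"
  unfolding rep_def by (rule someI[of "\<lambda>Q. Q \<in> orb n P" P]) (rule orb_refl)

lemma rep_idem:
  assumes n: "2 \<le> (n::nat)" and P: "P \<in> Timg n"
  shows "rep n (rep n P) = rep n P"
  using orb_eq[OF n P rep_in[OF P]] unfolding rep_def by simp

lemma Fam_sub: "Fam n \<subseteq> Timg n"
  unfolding Fam_def using rep_in orb_sub by blast

lemma Timg_rel:
  assumes "Q = act \<sigma> P" "P = Pmk n (a, b)" "Q = Pmk n (a', b')"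
  shows "\<forall>u<n. \<sigma> ` Pmk n (a, b) u = Pmk n (a', b') u"
  using assms by (auto simp: act_def)

lemma orb_le2:
  assumes n: "2 \<le> (n::nat)" and P: "P \<in> Timg n"
  shows "card (orb n P) \<le> 2"
proof -
  obtain a b where ab: "(a, b) \<in> Tset n" "P = Pmk n (a, b)" using P unfolding Timg_def by auto
  note a = Tset_D(1)[OF ab(1), unfolded fst_conv] and b = Tset_D(2)[OF ab(1), unfolded snd_conv]
  have nontriv: "\<exists>\<sigma>. inj_on \<sigma> {..<n} \<and> \<sigma> ` {..<n} \<subseteq> {..<n} \<and> good n a b \<sigma> \<and> \<sigma> (n - 1) \<noteq> n - 1 \<and> Q = act \<sigma> P"
    if Q: "Q \<in> orb n P" "Q \<noteq> P" for Q
  proof -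
    obtain \<sigma> where s: "inj_on \<sigma> {..<n}" "\<sigma> ` {..<n} \<subseteq> {..<n}" "Q = act \<sigma> P" "Q \<in> Timg n"
      using Q unfolding orb_def by auto
    obtain a' b' where ab': "Q = Pmk n (a', b')" using s(4) unfolding Timg_def by auto
    have g: "good n a b \<sigma>" using good_of_rel[OF Timg_rel[OF s(3) ab(2) ab'] n] .
    have "\<sigma> (n - 1) \<noteq> n - 1"
    proof
      assume "\<sigma> (n - 1) = n - 1"
      then have "\<forall>v<n. \<sigma> v = v" using good_fix[OF n a g] by simp
      then have "act \<sigma> P = P" using act_fix Timg_props(1)[OF n P] by blast
      then show False using s(3) Q(2) by simp
    qed
    then show ?thesis using s g by blast
  qed
  have uniq: "Q1 = Q2" if q: "Q1 \<in> orb n P" "Q1 \<noteq> P" "Q2 \<in> orb n P" "Q2 \<noteq> P" for Q1 Q2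
  proof -
    obtain \<sigma> where s: "inj_on \<sigma> {..<n}" "\<sigma> ` {..<n} \<subseteq> {..<n}" "good n a b \<sigma>" "\<sigma> (n - 1) \<noteq> n - 1" "Q1 = act \<sigma> P"
      using nontriv[OF q(1,2)] by blast
    obtain \<tau> where t: "inj_on \<tau> {..<n}" "\<tau> ` {..<n} \<subseteq> {..<n}" "good n a b \<tau>" "\<tau> (n - 1) \<noteq> n - 1" "Q2 = act \<tau> P"
      using nontriv[OF q(3,4)] by blast
    have "\<forall>v<n. \<sigma> v = \<tau> v" using good_unique[OF n a b s(1-4) t(1-4)] .
    then have "act \<sigma> P = act \<tau> P" by (rule act_cong) (rule Timg_props(1)[OF n P])
    then show ?thesis using s(5) t(5) by simp
  qed
  show ?thesis
  proof (cases "orb n P \<subseteq> {P}")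
    case True
    then have "card (orb n P) \<le> card {P}" by (intro card_mono) auto
    then show ?thesis by simp
  next
    case False
    then obtain Q1 where Q1: "Q1 \<in> orb n P" "Q1 \<noteq> P" by auto
    have "orb n P \<subseteq> {P, Q1}" using uniq[OF Q1] by blast
    then have "card (orb n P) \<le> card {P, Q1}" by (intro card_mono) auto
    also have "\<dots> \<le> 2" by (simp add: card_insert_if)
    finally show ?thesis .
  qed
qed

lemma card_forest_n:
  assumes n: "2 \<le> (n::nat)"
  shows "card (forest {..<n} {n - 1}) = n ^ (n - 2)"
proof -
  have "0 \<in> {..<n}" using n by simp
  then have ne: "{..<n} \<noteq> {}" by blast
  have "card (forest {..<n} {n - 1}) * n = 1 * n ^ (n - 1)"
    using forest_card[of "{..<n}" "{n - 1}", OF _ _ ne] n by simp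
  moreover have "n ^ (n - 1) = n ^ (n - 2) * n"
  proof -
    obtain m where "n = Suc (Suc m)" using n by (metis add_2_eq_Suc le_Suc_ex)
    then show ?thesis by simp
  qed
  ultimately show ?thesis using n by simp
qed

lemma finite_Tset: "finite (Tset n)"
  unfolding Tset_def by (intro finite_cartesian_product finite_forest) auto

lemma card_Tset:
  assumes n: "2 \<le> (n::nat)"
  shows "card (Tset n) = n ^ (n - 2) * (n - 1)"
  unfolding Tset_def using card_forest_n[OF n] by (simp add: card_cartesian_product)

lemma inj_Pmk:
  assumes n: "2 \<le> (n::nat)"
  shows "inj_on (Pmk n) (Tset n)"
proof
  fix x y assume x: "x \<in> Tset n" and y: "y \<in> Tset n" and e: "Pmk n x = Pmk n y"
  obtain a b where xe: "x = (a, b)" by (cases x)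
  obtain a' b' where ye: "y = (a', b')" by (cases y)
  have a: "a \<in> forest {..<n} {n - 1}" "b < n - 1" using Tset_D[OF x] xe by auto
  have a': "a' \<in> forest {..<n} {n - 1}" "b' < n - 1" using Tset_D[OF y] ye by auto
  have ea: "a v = a' v" for v
  proof (cases "v < n - 1")
    case True
    have "{v, a v} = {v, a' v}" using fun_cong[OF e, of v] True xe ye by (simp add: Pmk_def)
    moreover have "a v \<noteq> v" "a' v \<noteq> v" using fo_basic(2)[OF n a(1) True] fo_basic(2)[OF n a'(1) True] by auto
    ultimately show ?thesis by (auto simp: doubleton_eq_iff)
  next
    case False
    then have "v \<notin> {..<n} - {n - 1}" by auto
    moreover have "a \<in> extensional ({..<n} - {n - 1})" "a' \<in> extensional ({..<n} - {n - 1})"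
      using a(1) a'(1) unfolding forest_def PiE_def by auto
    ultimately show ?thesis unfolding extensional_def by auto
  qed
  have "{n - 1, b} = {n - 1, b'}" using fun_cong[OF e, of "n - 1"] xe ye by (simp add: Pmk_def)
  then have "b = b'" using a(2) a'(2) by (auto simp: doubleton_eq_iff)
  then show "x = y" using ea xe ye by auto
qed

lemma card_Timg:
  assumes n: "2 \<le> (n::nat)"
  shows "card (Timg n) = n ^ (n - 2) * (n - 1)"
  unfolding Timg_def using card_image[OF inj_Pmk[OF n]] card_Tset[OF n] by simp

lemma finite_Timg: "finite (Timg n)"
  unfolding Timg_def using finite_Tset by simp

lemma card_Fam:
  assumes n: "2 \<le> (n::nat)"
  shows "card (Timg n) \<le> 2 * card (Fam n)"
proof -
  have finF: "finite (Fam n)" unfolding Fam_def using finite_Timg by simp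
  have "Timg n \<subseteq> (\<Union>Q\<in>Fam n. orb n Q)"
  proof
    fix P assume P: "P \<in> Timg n"
    have "orb n (rep n P) = orb n P" using orb_eq[OF n P rep_in[OF P]] .
    then have "P \<in> orb n (rep n P)" using orb_refl[OF P] by simp
    moreover have "rep n P \<in> Fam n" using P unfolding Fam_def by simp
    ultimately show "P \<in> (\<Union>Q\<in>Fam n. orb n Q)" by blast
  qed
  moreover have "finite (\<Union>Q\<in>Fam n. orb n Q)"
    using finF finite_Timg orb_sub by (meson finite_UN_I finite_subset)
  ultimately have "card (Timg n) \<le> card (\<Union>Q\<in>Fam n. orb n Q)" by (rule card_mono[rotated])
  also have "\<dots> \<le> (\<Sum>Q\<in>Fam n. card (orb n Q))" by (rule card_UN_le[OF finF])
  also have "\<dots> \<le> (\<Sum>Q\<in>Fam n. 2)"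
    by (rule sum_mono) (use orb_le2[OF n] Fam_sub in blast)
  also have "\<dots> = 2 * card (Fam n)" by simp
  finally show ?thesis .
qed

lemma Fam_rig:
  assumes n: "3 \<le> (n::nat)" and P: "P \<in> Fam n" and P': "P' \<in> Fam n"
    and s: "inj_on \<sigma> {..<n}" "\<sigma> ` {..<n} \<subseteq> {..<n}" and rel: "\<forall>u<n. P' u = \<sigma> ` P u"
  shows "\<forall>v<n. \<sigma> v = v"
proof -
  have n2: "2 \<le> n" using n by simp
  have PT: "P \<in> Timg n" and PT': "P' \<in> Timg n" using P P' Fam_sub by auto
  have "P' = act \<sigma> P"
  proof
    fix u show "P' u = act \<sigma> P u"
    proof (cases "u < n")
      case True then show ?thesis using rel by (simp add: act_def)
    next
      case False then show ?thesis using Timg_props(2)[OF n2 PT] Timg_props(2)[OF n2 PT'] by (simp add: act_def)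
    qed
  qed
  then have "P' \<in> orb n P" using PT' s unfolding orb_def by blast
  then have oe: "orb n P' = orb n P" using orb_eq[OF n2 PT] by blast
  have rP: "rep n P = P" using P rep_idem[OF n2] unfolding Fam_def by auto
  have rP': "rep n P' = P'" using P' rep_idem[OF n2] unfolding Fam_def by auto
  have "rep n P' = rep n P" unfolding rep_def oe ..
  then have "P' = P" using rP rP' by simp
  obtain a b where ab: "(a, b) \<in> Tset n" "P = Pmk n (a, b)" using PT unfolding Timg_def by auto
  show ?thesis
  proof (rule no_aut[OF n _ _ s])
    show "a \<in> forest {..<n} {n - 1}" "b < n - 1" using Tset_D[OF ab(1)] by auto
    show "\<forall>u<n. \<sigma> ` Pmk n (a, b) u = Pmk n (a, b) u" using rel \<open>P' = P\<close> ab(2) by simp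
  qed
qed




definition mkE :: "nat \<Rightarrow> nat \<Rightarrow> (nat \<Rightarrow> nat \<Rightarrow> nat set) \<Rightarrow> ((nat \<times> nat) \<times> (nat \<times> nat)) set" where
  "mkE n d Ps = {((i, u), (Suc i, v)) | i u v. i < d \<and> u < n \<and> v \<in> Ps i u}"

lemma mkE_iff:
  "(x, y) \<in> mkE n d Ps \<longleftrightarrow> fst x < d \<and> snd x < n \<and> fst y = Suc (fst x) \<and> snd y \<in> Ps (fst x) (snd x)"
  by (cases x; cases y) (auto simp: mkE_def)

lemma pedV_iff: "x \<in> pedV n d \<longleftrightarrow> fst x \<le> d \<and> snd x < n"
  by (cases x) (auto simp: pedV_def)

lemma Fam_props:
  assumes n: "2 \<le> (n::nat)" and P: "P \<in> Fam n"
  shows "\<And>u. P u \<subseteq> {..<n}" "\<And>u. n \<le> u \<Longrightarrow> P u = {}"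
    "\<And>u. u < n \<Longrightarrow> card (P u) = 2" "\<And>v. v < n \<Longrightarrow> v \<in> P v"
  using Timg_props[OF n] P Fam_sub by blast+

lemma dgp_mkE:
  assumes n: "2 \<le> (n::nat)" and d: "1 \<le> d" and Ps: "Ps \<in> {..<d} \<rightarrow>\<^sub>E Fam n"
  shows "dgp n d (mkE n d Ps)"
proof -
  let ?E = "mkE n d Ps"
  have F: "\<And>i. i < d \<Longrightarrow> Ps i \<in> Fam n" using Ps by auto
  have c1: "?E \<subseteq> pedV n d \<times> pedV n d"
  proof
    fix p assume p: "p \<in> ?E"
    obtain x y where pe: "p = (x, y)" by (cases p)
    have h: "fst x < d" "snd x < n" "fst y = Suc (fst x)" "snd y \<in> Ps (fst x) (snd x)"
      using p pe mkE_iff by auto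
    have "snd y < n" using Fam_props(1)[OF n F[OF h(1)]] h(4) by auto
    then show "p \<in> pedV n d \<times> pedV n d" using h pe by (auto simp: pedV_iff)
  qed
  have c2: "\<forall>(u, v)\<in>?E. fst v = Suc (fst u)" using mkE_iff by auto
  have c3: "\<forall>u\<in>pedV n d. fst u < d \<longrightarrow> card {v. (u, v) \<in> ?E} = 2"
  proof (intro ballI impI)
    fix u assume u: "u \<in> pedV n d" "fst u < d"
    have un: "snd u < n" using u pedV_iff by auto
    have "{v. (u, v) \<in> ?E} = (\<lambda>w. (Suc (fst u), w)) ` Ps (fst u) (snd u)"
      using u un by (auto simp: mkE_iff image_iff intro: prod_eqI)
    moreover have "inj_on (\<lambda>w. (Suc (fst u), w)) (Ps (fst u) (snd u))" by (rule inj_onI) simp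
    then have "card ((\<lambda>w. (Suc (fst u), w)) ` Ps (fst u) (snd u)) = card (Ps (fst u) (snd u))"
      by (rule card_image)
    ultimately have "card {v. (u, v) \<in> ?E} = card (Ps (fst u) (snd u))" by simp
    then show "card {v. (u, v) \<in> ?E} = 2" using Fam_props(3)[OF n F[OF u(2)] un] by simp
  qed
  have c4: "\<forall>u\<in>pedV n d. \<exists>v. (u, v) \<in> ?E \<or> (v, u) \<in> ?E"
  proof
    fix u assume u: "u \<in> pedV n d"
    have un: "snd u < n" using u pedV_iff by auto
    show "\<exists>v. (u, v) \<in> ?E \<or> (v, u) \<in> ?E"
    proof (cases "fst u < d")
      case True
      have "(u, (Suc (fst u), snd u)) \<in> ?E"
        using True un Fam_props(4)[OF n F[OF True] un] by (simp add: mkE_iff)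
      then show ?thesis by blast
    next
      case False
      then have fu: "fst u = d" using u pedV_iff by auto
      have dl: "d - 1 < d" using d by simp
      have "((d - 1, snd u), u) \<in> ?E"
        using fu d un Fam_props(4)[OF n F[OF dl] un] by (simp add: mkE_iff)
      then show ?thesis by blast
    qed
  qed
  show ?thesis unfolding dgp_def using c1 c2 c3 c4 by blast
qed

lemma rigid:
  assumes n: "3 \<le> (n::nat)" and Ps: "Ps \<in> {..<d} \<rightarrow>\<^sub>E Fam n" and Ps': "Ps' \<in> {..<d} \<rightarrow>\<^sub>E Fam n"
    and iso: "ped_iso n d (mkE n d Ps) (mkE n d Ps')"
  shows "Ps = Ps'"
proof -
  have n2: "2 \<le> n" using n by simp
  have F: "\<And>i. i < d \<Longrightarrow> Ps i \<in> Fam n" using Ps by auto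
  have F': "\<And>i. i < d \<Longrightarrow> Ps' i \<in> Fam n" using Ps' by auto
  obtain f where fp: "bij_betw f (pedV n d) (pedV n d) \<and> (\<forall>j<n. f (0, j) = (0, j)) \<and>
     (\<forall>u\<in>pedV n d. \<forall>v\<in>pedV n d. (u, v) \<in> mkE n d Ps \<longleftrightarrow> (f u, f v) \<in> mkE n d Ps')"
    using iso unfolding ped_iso_def by (elim exE) (rule that)
  note bij = conjunct1[OF fp] and f0 = conjunct1[OF conjunct2[OF fp]]
    and arc = conjunct2[OF conjunct2[OF fp]]
  have arc': "(u, v) \<in> mkE n d Ps \<longleftrightarrow> (f u, f v) \<in> mkE n d Ps'"
    if "u \<in> pedV n d" "v \<in> pedV n d" for u v using arc[rule_format, OF that] .
  have finj: "inj_on f (pedV n d)" using bij_betw_imp_inj_on[OF bij] .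
  have fsurj: "f ` pedV n d = pedV n d" using bij_betw_imp_surj_on[OF bij] .
  have fin: "\<And>x. x \<in> pedV n d \<Longrightarrow> f x \<in> pedV n d" using fsurj by blast
  have fixlev: "\<forall>j<n. f (i, j) = (i, j)" if "i \<le> d" for i
    using that
  proof (induction i)
    case 0 then show ?case using f0 by simp
  next
    case (Suc i)
    have id: "i < d" using Suc.prems by simp
    have IH: "\<forall>j<n. f (i, j) = (i, j)" using Suc.IH Suc.prems by simp
    define \<sigma> where "\<sigma> v = snd (f (Suc i, v))" for v
    have fS: "f (Suc i, v) = (Suc i, \<sigma> v) \<and> \<sigma> v < n" if v: "v < n" for v
    proof -
      have "((i, v), (Suc i, v)) \<in> mkE n d Ps"
        using id v Fam_props(4)[OF n2 F[OF id] v] by (simp add: mkE_iff)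
      moreover have "(i, v) \<in> pedV n d" "(Suc i, v) \<in> pedV n d" using id v Suc.prems by (auto simp: pedV_iff)
      ultimately have "(f (i, v), f (Suc i, v)) \<in> mkE n d Ps'" using arc' by simp
      then have "((i, v), f (Suc i, v)) \<in> mkE n d Ps'" using IH v by simp
      then have "fst (f (Suc i, v)) = Suc i" by (simp add: mkE_iff)
      moreover have "snd (f (Suc i, v)) < n" using fin[OF \<open>(Suc i, v) \<in> pedV n d\<close>] pedV_iff by blast
      ultimately show ?thesis unfolding \<sigma>_def by (simp add: prod_eq_iff)
    qed
    have sinj: "inj_on \<sigma> {..<n}"
    proof
      fix x y assume xy: "x \<in> {..<n}" "y \<in> {..<n}" "\<sigma> x = \<sigma> y"
      then have "f (Suc i, x) = f (Suc i, y)" using fS by auto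
      moreover have "(Suc i, x) \<in> pedV n d" "(Suc i, y) \<in> pedV n d" using xy Suc.prems by (auto simp: pedV_iff)
      ultimately have "(Suc i, x) = (Suc i, y)" using inj_onD[OF finj] by blast
      then show "x = y" by simp
    qed
    have smap: "\<sigma> ` {..<n} \<subseteq> {..<n}" using fS by auto
    have rel: "\<forall>u<n. Ps' i u = \<sigma> ` Ps i u"
    proof (intro allI impI)
      fix u assume u: "u < n"
      have iu: "(i, u) \<in> pedV n d" using id u by (auto simp: pedV_iff)
      show "Ps' i u = \<sigma> ` Ps i u"
      proof
        show "\<sigma> ` Ps i u \<subseteq> Ps' i u"
        proof
          fix w assume "w \<in> \<sigma> ` Ps i u"
          then obtain v where v: "v \<in> Ps i u" "w = \<sigma> v" by auto
          have vn: "v < n" using Fam_props(1)[OF n2 F[OF id]] v(1) by auto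
          have "((i, u), (Suc i, v)) \<in> mkE n d Ps" using id u v(1) by (simp add: mkE_iff)
          moreover have "(Suc i, v) \<in> pedV n d" using vn Suc.prems by (auto simp: pedV_iff)
          ultimately have "(f (i, u), f (Suc i, v)) \<in> mkE n d Ps'" using arc'[OF iu] by simp
          then have "((i, u), (Suc i, \<sigma> v)) \<in> mkE n d Ps'" using IH u fS[OF vn] by simp
          then show "w \<in> Ps' i u" using v(2) by (simp add: mkE_iff)
        qed
        show "Ps' i u \<subseteq> \<sigma> ` Ps i u"
        proof
          fix w assume w: "w \<in> Ps' i u"
          have wn: "w < n" using Fam_props(1)[OF n2 F'[OF id]] w by auto
          have "(Suc i, w) \<in> pedV n d" using wn Suc.prems by (auto simp: pedV_iff)
          then have "(Suc i, w) \<in> f ` pedV n d" using fsurj by simp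
          then obtain x where x: "x \<in> pedV n d" "f x = (Suc i, w)" by (auto simp: image_iff)
          have "((i, u), (Suc i, w)) \<in> mkE n d Ps'" using id u w by (simp add: mkE_iff)
          then have "(f (i, u), f x) \<in> mkE n d Ps'" using IH u x(2) by simp
          then have "((i, u), x) \<in> mkE n d Ps" using arc'[OF iu x(1)] by simp
          then have xs: "fst x = Suc i" "snd x \<in> Ps i u" by (auto simp: mkE_iff)
          then have xe: "x = (Suc i, snd x)" by (simp add: prod_eq_iff)
          have "f (Suc i, snd x) = (Suc i, w)" using x(2) xe by simp
          then have "\<sigma> (snd x) = w" unfolding \<sigma>_def by simp
          then show "w \<in> \<sigma> ` Ps i u" using xs(2) by blast
        qed
      qed
    qed
    have "\<forall>v<n. \<sigma> v = v" by (rule Fam_rig[OF n F[OF id] F'[OF id] sinj smap rel])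
    then show ?case using fS by simp
  qed
  show ?thesis
  proof (rule PiE_ext[OF Ps Ps'])
    fix i assume "i \<in> {..<d}"
    then have id: "i < d" by simp
    show "Ps i = Ps' i"
    proof
      fix u
      show "Ps i u = Ps' i u"
      proof (cases "u < n")
        case False
        then show ?thesis using Fam_props(2)[OF n2 F[OF id]] Fam_props(2)[OF n2 F'[OF id]] by simp
      next
        case u: True
        have iu: "(i, u) \<in> pedV n d" using id u by (auto simp: pedV_iff)
        have fi: "f (i, u) = (i, u)" using fixlev[of i] id u by simp
        have mem: "v \<in> Ps i u \<longleftrightarrow> v \<in> Ps' i u" if vn: "v < n" for v
        proof -
          have sv: "(Suc i, v) \<in> pedV n d" using vn id by (auto simp: pedV_iff)
          have fs: "f (Suc i, v) = (Suc i, v)" using fixlev[of "Suc i"] id vn by simp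
          have "v \<in> Ps i u \<longleftrightarrow> ((i, u), (Suc i, v)) \<in> mkE n d Ps" using id u by (simp add: mkE_iff)
          also have "\<dots> \<longleftrightarrow> (f (i, u), f (Suc i, v)) \<in> mkE n d Ps'" by (rule arc'[OF iu sv])
          also have "\<dots> \<longleftrightarrow> v \<in> Ps' i u" using fi fs id u by (simp add: mkE_iff)
          finally show ?thesis .
        qed
        show ?thesis
        proof
          show "Ps i u \<subseteq> Ps' i u" using mem Fam_props(1)[OF n2 F[OF id]] by blast
          show "Ps' i u \<subseteq> Ps i u" using mem Fam_props(1)[OF n2 F'[OF id]] by blast
        qed
      qed
    qed
  qed
qed




lemma finite_pedV: "finite (pedV n d)"
proof -
  have "pedV n d \<subseteq> {..d} \<times> {..<n}" by (auto simp: pedV_def)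
  then show ?thesis by (rule finite_subset) auto
qed

lemma finite_dgp: "finite {E. dgp n d E}"
proof -
  have "{E. dgp n d E} \<subseteq> Pow (pedV n d \<times> pedV n d)" by (auto simp: dgp_def)
  then show ?thesis by (rule finite_subset) (simp add: finite_pedV)
qed

lemma card_dgp_le: "card {E. dgp n d E} \<le> (n choose 2) ^ (n * d)"
proof -
  define g where "g E = (\<lambda>p \<in> {..<d} \<times> {..<n}. {w. ((fst p, snd p), (Suc (fst p), w)) \<in> E})"
    for E :: "((nat \<times> nat) \<times> (nat \<times> nat)) set"
  define B where "B = PiE ({..<d} \<times> {..<n}) (\<lambda>_. {S. S \<subseteq> {..<n} \<and> card S = 2})"
  have cB: "card B = (n choose 2) ^ (n * d)"
  proof -
    have "card B = (\<Prod>p\<in>{..<d} \<times> {..<n}. card {S. S \<subseteq> {..<n} \<and> card S = 2})"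
      unfolding B_def by (rule card_PiE) simp
    also have "\<dots> = (n choose 2) ^ (d * n)" using n_subsets[of "{..<n}" 2]
      by (simp add: card_cartesian_product)
    finally show ?thesis by (simp add: mult.commute)
  qed
  have finB: "finite B" unfolding B_def by (intro finite_PiE) auto
  have img: "g ` {E. dgp n d E} \<subseteq> B"
  proof
    fix x assume "x \<in> g ` {E. dgp n d E}"
    then obtain E where E: "dgp n d E" "x = g E" by auto
    have sub: "E \<subseteq> pedV n d \<times> pedV n d" and fs: "\<forall>(u, v)\<in>E. fst v = Suc (fst u)"
      and c: "\<forall>u\<in>pedV n d. fst u < d \<longrightarrow> card {v. (u, v) \<in> E} = 2"
      using E(1) unfolding dgp_def by blast+
    show "x \<in> B" unfolding B_def E(2) g_def
    proof (rule PiE_I)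
      fix p assume p: "p \<in> {..<d} \<times> {..<n}"
      obtain i j where pe: "p = (i, j)" by (cases p)
      have ij: "i < d" "j < n" using p pe by auto
      have u: "(i, j) \<in> pedV n d" using ij by (auto simp: pedV_def)
      have eq: "{v. ((i, j), v) \<in> E} = (\<lambda>w. (Suc i, w)) ` {w. ((i, j), (Suc i, w)) \<in> E}"
      proof
        show "{v. ((i, j), v) \<in> E} \<subseteq> (\<lambda>w. (Suc i, w)) ` {w. ((i, j), (Suc i, w)) \<in> E}"
        proof
          fix v assume v: "v \<in> {v. ((i, j), v) \<in> E}"
          then have "fst v = Suc i" using fs by auto
          then have "v = (Suc i, snd v)" by (simp add: prod_eq_iff)
          then show "v \<in> (\<lambda>w. (Suc i, w)) ` {w. ((i, j), (Suc i, w)) \<in> E}" using v by force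
        qed
      qed auto
      have "inj_on (\<lambda>w. (Suc i, w)) {w. ((i, j), (Suc i, w)) \<in> E}" by (rule inj_onI) simp
      then have "card {w. ((i, j), (Suc i, w)) \<in> E} = card {v. ((i, j), v) \<in> E}"
        unfolding eq by (simp add: card_image)
      also have "\<dots> = 2" using c u ij by auto
      finally have c2: "card {w. ((i, j), (Suc i, w)) \<in> E} = 2" .
      have "{w. ((i, j), (Suc i, w)) \<in> E} \<subseteq> {..<n}"
        using sub by (auto simp: pedV_def)
      then show "(\<lambda>p\<in>{..<d} \<times> {..<n}. {w. ((fst p, snd p), (Suc (fst p), w)) \<in> E}) p
          \<in> {S. S \<subseteq> {..<n} \<and> card S = 2}" using p pe c2 by simp
    next
      fix p assume "p \<notin> {..<d} \<times> {..<n}"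
      then show "(\<lambda>p\<in>{..<d} \<times> {..<n}. {w. ((fst p, snd p), (Suc (fst p), w)) \<in> E}) p = undefined"
        by simp
    qed
  qed
  have inj: "inj_on g {E. dgp n d E}"
  proof
    fix E1 E2 assume E1: "E1 \<in> {E. dgp n d E}" and E2: "E2 \<in> {E. dgp n d E}" and e: "g E1 = g E2"
    have key: "E \<subseteq> E'" if E: "dgp n d E" and E': "dgp n d E'" and ge: "g E = g E'" for E E'
    proof
      fix p assume p: "p \<in> E"
      obtain x y where pe: "p = (x, y)" by (cases p)
      have sub: "E \<subseteq> pedV n d \<times> pedV n d" and fs: "\<forall>(u, v)\<in>E. fst v = Suc (fst u)"
        using E unfolding dgp_def by blast+
      have xy: "x \<in> pedV n d" "y \<in> pedV n d" using sub p pe by auto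
      have fy: "fst y = Suc (fst x)" using fs p pe by auto
      have xd: "fst x < d" "snd x < n" using xy fy by (auto simp: pedV_def)
      have yv: "y = (Suc (fst x), snd y)" using fy by (simp add: prod_eq_iff)
      have "snd y \<in> g E (fst x, snd x)" unfolding g_def using xd p pe yv by (auto simp: mem_Times_iff)
      then have "snd y \<in> g E' (fst x, snd x)" using ge by simp
      then have "((fst x, snd x), (Suc (fst x), snd y)) \<in> E'" unfolding g_def using xd by (auto simp: mem_Times_iff)
      then show "p \<in> E'" using pe yv by simp
    qed
    show "E1 = E2" using key[of E1 E2] key[of E2 E1] E1 E2 e by auto
  qed
  have "card {E. dgp n d E} \<le> card B" by (rule card_inj_on_le[OF inj img finB])
  then show ?thesis using cB by simp
qed

lemma quotient_image: "A // r = (\<lambda>x. r `` {x}) ` A"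
  unfolding quotient_def by auto

lemma N_le: "N n d \<le> card {E. dgp n d E}"
  unfolding N_def quotient_image by (rule card_image_le[OF finite_dgp])

lemma ped_iso_refl: "ped_iso n d E E"
  unfolding ped_iso_def by (rule exI[of _ id]) auto

theorem mainTheorem7:
  fixes n d :: nat
  assumes "n \<ge> 2" and "d \<ge> 1"
  shows "((real (n - 1) * real n ^ (n - 2)) / 2) ^ d \<le> real (N n d)
         \<and> real (N n d) \<le> real (n choose 2) ^ (n * d)"
proof
  have "N n d \<le> (n choose 2) ^ (n * d)" using N_le card_dgp_le le_trans by blast
  then show "real (N n d) \<le> real (n choose 2) ^ (n * d)"
    by (metis of_nat_le_iff of_nat_power)
next
  have n: "2 \<le> n" using assms by simp
  define X where "X = PiE {..<d} (\<lambda>_. Fam n)"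
  define \<Psi> where "\<Psi> Ps = ped_iso_rel n d `` {mkE n d Ps}" for Ps
  have sub: "\<Psi> ` X \<subseteq> {E. dgp n d E} // ped_iso_rel n d"
  proof
    fix c assume "c \<in> \<Psi> ` X"
    then obtain Ps where Ps: "Ps \<in> X" "c = \<Psi> Ps" by auto
    have "dgp n d (mkE n d Ps)" using dgp_mkE[OF n assms(2)] Ps(1) X_def by simp
    then show "c \<in> {E. dgp n d E} // ped_iso_rel n d"
      unfolding quotient_image \<Psi>_def Ps(2) by blast
  qed
  have finQ: "finite ({E. dgp n d E} // ped_iso_rel n d)"
    unfolding quotient_image using finite_dgp by simp
  have le: "card (\<Psi> ` X) \<le> N n d" unfolding N_def by (rule card_mono[OF finQ sub])
  have cF: "n ^ (n - 2) * (n - 1) \<le> 2 * card (Fam n)" using card_Fam[OF n] card_Timg[OF n] by simp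
  show "((real (n - 1) * real n ^ (n - 2)) / 2) ^ d \<le> real (N n d)"
  proof (cases "n = 2")
    case True
    have "Timg n \<noteq> {}" using card_Timg[OF n] True by auto
    then have "Fam n \<noteq> {}" unfolding Fam_def by simp
    then obtain P where "P \<in> Fam n" by blast
    then have "(\<lambda>i\<in>{..<d}. P) \<in> X" unfolding X_def by simp
    then have "\<Psi> ` X \<noteq> {}" by blast
    moreover have "finite (\<Psi> ` X)" using finite_subset[OF sub finQ] .
    ultimately have "1 \<le> card (\<Psi> ` X)" by (simp add: Suc_le_eq card_gt_0_iff)
    then have N1: "1 \<le> N n d" using le by simp
    have "((real (n - 1) * real n ^ (n - 2)) / 2) ^ d = (1 / 2) ^ d" using True by simp
    also have "\<dots> \<le> 1" by (simp add: power_le_one)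
    also have "\<dots> \<le> real (N n d)" using N1 by simp
    finally show ?thesis .
  next
    case False
    then have n3: "3 \<le> n" using n by simp
    have inj: "inj_on \<Psi> X"
    proof
      fix Ps Ps' assume Ps: "Ps \<in> X" and Ps': "Ps' \<in> X" and e: "\<Psi> Ps = \<Psi> Ps'"
      have "dgp n d (mkE n d Ps')" using dgp_mkE[OF n assms(2)] Ps' X_def by simp
      then have "(mkE n d Ps', mkE n d Ps') \<in> ped_iso_rel n d"
        unfolding ped_iso_rel_def using ped_iso_refl by simp
      then have "mkE n d Ps' \<in> \<Psi> Ps" using e unfolding \<Psi>_def by simp
      then have "ped_iso n d (mkE n d Ps) (mkE n d Ps')" unfolding \<Psi>_def ped_iso_rel_def by simp
      then show "Ps = Ps'" using rigid[OF n3] Ps Ps' X_def by simp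
    qed
    have cX: "card X = card (Fam n) ^ d" unfolding X_def by (simp add: card_PiE)
    have "card (Fam n) ^ d \<le> N n d" using le card_image[OF inj] cX by simp
    then have r1: "real (card (Fam n)) ^ d \<le> real (N n d)" by (metis of_nat_le_iff of_nat_power)
    have "real (n ^ (n - 2) * (n - 1)) \<le> real (2 * card (Fam n))" using cF by (simp only: of_nat_le_iff)
    then have "real (n - 1) * real n ^ (n - 2) \<le> 2 * real (card (Fam n))" by (simp add: mult.commute)
    then have "(real (n - 1) * real n ^ (n - 2)) / 2 \<le> real (card (Fam n))" by simp
    then have "((real (n - 1) * real n ^ (n - 2)) / 2) ^ d \<le> real (card (Fam n)) ^ d"
      by (rule power_mono) simp
    then show ?thesis using r1 by linarith
  qed
qed


end
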